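(* Let $c$ be the ellipse $x^2/a_c^2+y^2/b_c^2=1$ with $a_c>b_c>0$, linear eccentricity $d=\sqrt{a_c^2-b_c^2}$ and numerical eccentricity $m=d/a_c$, and let $\mathrm{sn},\mathrm{cn},\mathrm{dn}$ denote the Jacobian elliptic functions with modulus $m$ and $K$ the complete elliptic integral of the first kind with modulus $m$. \begin{enumerate} \item For every ellipse $e$ with semiaxes $(a_e,b_e)$ confocal with $c$ and exterior to it, the billiards in $e$ with caustic $c$ are canonically parametrized by $\tilde u\mapsto(-a_e\,\mathrm{sn}\,\tilde u,\ b_e\,\mathrm{cn}\,\tilde u)$ in the following sense: if $\Delta\tilde u$ satisfies $b_c=b_e\,\mathrm{cn}(\Delta\tilde u)$, then for any initial value $\tilde u_0$ the vertices of the billiard in $e$ with caustic $c$ starting at the point with parameter $\tilde u_0$ have the parameters $\tilde u_0+2k\Delta\tilde u$, $k\in\mathbb Z$. \item Conversely, let $N\ge 3$ and $\tau\ge1$ be integers with $\gcd(N,\tau)=1$ and $2\tau<N$, and put $\Delta\tilde u=\frac{2\tau K}{N}$. If \[a_e=\frac{a_c\,\mathrm{dn}(\Delta\tilde u)}{\mathrm{cn}(\Delta\tilde u)},\qquad b_e=\frac{b_c}{\mathrm{cn}(\Delta\tilde u)},\] then the ellipse $e$ with semiaxes $(a_e,b_e)$ is confocal with $c$ and the billiards in $e$ with caustic $c$ are $N$-periodic with turning number $\tau$. \end{enumerate}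
   Context: Confocal conics of $c$: $\frac{x^2}{a_c^2+k}+\frac{y^2}{b_c^2+k}=1$. An ellipse $e$ confocal with $c$ and exterior to it has semiaxes $a_e^2=a_c^2+k_e$, $b_e^2=b_c^2+k_e$ with $k_e>0$. A billiard in $e$ with caustic $c$ is a sequence of points $P_1,P_2,\dots$ on $e$ such that each line $P_iP_{i+1}$ is tangent to $c$ and $P_{i-1}P_i$, $P_iP_{i+1}$ are the two tangents from $P_i$ to $c$; it is traversed counterclockwise. It is $N$-periodic if $P_{i+N}=P_i$ for all $i$; its turning number $\tau$ is the number of times one period of the billiard winds around the center of $e$. The modulus convention: $\tilde u=\int_0^{\varphi}\frac{d\psi}{\sqrt{1-m^2\sin^2\psi}}$, $\mathrm{sn}\,\tilde u=\sin\varphi$, $\mathrm{cn}\,\tilde u=\cos\varphi$, $\mathrm{dn}\,\tilde u=\sqrt{1-m^2\mathrm{sn}^2\tilde u}$, $K=\int_0^{\pi/2}\frac{d\psi}{\sqrt{1-m^2\sin^2\psi}}$. *)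

theory Defs
  imports "HOL-Analysis.Analysis"
begin

definition ellF :: "real \<Rightarrow> real \<Rightarrow> real" where
  "ellF m \<phi> =
     (if 0 \<le> \<phi> then integral {0..\<phi>} (\<lambda>\<psi>. 1 / sqrt (1 - m\<^sup>2 * (sin \<psi>)\<^sup>2))
      else - integral {\<phi>..0} (\<lambda>\<psi>. 1 / sqrt (1 - m\<^sup>2 * (sin \<psi>)\<^sup>2)))"

definition jam :: "real \<Rightarrow> real \<Rightarrow> real" where
  "jam m u = (THE \<phi>. ellF m \<phi> = u)"

definition jsn :: "real \<Rightarrow> real \<Rightarrow> real" where "jsn m u = sin (jam m u)"
definition jcn :: "real \<Rightarrow> real \<Rightarrow> real" where "jcn m u = cos (jam m u)"
definition jdn :: "real \<Rightarrow> real \<Rightarrow> real" where "jdn m u = sqrt (1 - m\<^sup>2 * (jsn m u)\<^sup>2)"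

definition ellK :: "real \<Rightarrow> real" where "ellK m = ellF m (pi / 2)"

definition ellipse :: "real \<Rightarrow> real \<Rightarrow> complex set" where
  "ellipse a b = {z. (Re z / a)\<^sup>2 + (Im z / b)\<^sup>2 = 1}"

definition line_through :: "complex \<Rightarrow> complex \<Rightarrow> complex set" where
  "line_through p q = {p + of_real t * (q - p) | t. True}"

text \<open>A line is tangent to the (convex) ellipse iff it meets it in exactly one point.\<close>
definition tangent_to :: "complex set \<Rightarrow> real \<Rightarrow> real \<Rightarrow> bool" where
  "tangent_to L a b \<longleftrightarrow> (\<exists>!z. z \<in> L \<and> z \<in> ellipse a b)"

text \<open>Billiard in the ellipse e (semiaxes ae, be) with caustic c (semiaxes ac, bc),
  traversed counterclockwise, indexed by the integers.\<close>
definition billiard :: "real \<Rightarrow> real \<Rightarrow> real \<Rightarrow> real \<Rightarrow> (int \<Rightarrow> complex) \<Rightarrow> bool" where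
  "billiard ae be ac bc P \<longleftrightarrow>
     (\<forall>i. P i \<in> ellipse ae be) \<and>
     (\<forall>i. P i \<noteq> P (i + 1)) \<and>
     (\<forall>i. tangent_to (line_through (P i) (P (i + 1))) ac bc) \<and>
     (\<forall>i. line_through (P (i - 1)) (P i) \<noteq> line_through (P i) (P (i + 1))) \<and>
     (\<forall>i. Re (P i) * Im (P (i + 1)) - Im (P i) * Re (P (i + 1)) > 0)"

definition periodic_billiard :: "(int \<Rightarrow> complex) \<Rightarrow> nat \<Rightarrow> bool" where
  "periodic_billiard P N \<longleftrightarrow> (\<forall>i. P (i + int N) = P i)"

definition turning_number :: "(int \<Rightarrow> complex) \<Rightarrow> nat \<Rightarrow> real" where
  "turning_number P N = (\<Sum>i\<in>{0..<int N}. Arg (P (i + 1) / P i)) / (2 * pi)"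

definition bparam :: "real \<Rightarrow> real \<Rightarrow> real \<Rightarrow> real \<Rightarrow> complex" where
  "bparam ae be m u = Complex (- ae * jsn m u) (be * jcn m u)"

definition confocal_exterior :: "real \<Rightarrow> real \<Rightarrow> real \<Rightarrow> real \<Rightarrow> bool" where
  "confocal_exterior ae be ac bc \<longleftrightarrow> ae > 0 \<and> be > 0 \<and>
     (\<exists>k>0. ae\<^sup>2 = ac\<^sup>2 + k \<and> be\<^sup>2 = bc\<^sup>2 + k)"

end

theory Submission
  imports Defs
begin


definition gg :: "real \<Rightarrow> real \<Rightarrow> real" where
  "gg m \<psi> = 1 / sqrt (1 - m\<^sup>2 * (sin \<psi>)\<^sup>2)"

lemma rad_pos: fixes m x :: real assumes "m\<^sup>2 < 1" shows "1 - m\<^sup>2 * (sin x)\<^sup>2 > 0"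
proof -
  have "(sin x)\<^sup>2 + (cos x)\<^sup>2 = 1" by simp
  moreover have "(cos x)\<^sup>2 \<ge> 0" by simp
  ultimately have "(sin x)\<^sup>2 \<le> 1" by linarith
  hence "m\<^sup>2 * (sin x)\<^sup>2 \<le> m\<^sup>2" by (simp add: mult_left_le)
  thus ?thesis using assms by linarith
qed

lemma rad_le1: fixes m x :: real shows "1 - m\<^sup>2 * (sin x)\<^sup>2 \<le> 1"
proof -
  have "0 \<le> m\<^sup>2 * (sin x)\<^sup>2" by simp
  thus ?thesis by linarith
qed

lemma gg_pos: fixes m x :: real assumes "m\<^sup>2 < 1" shows "gg m x > 0"
  using rad_pos[OF assms] by (simp add: gg_def)

lemma gg_ge1: fixes m x :: real assumes "m\<^sup>2 < 1" shows "gg m x \<ge> 1"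
proof -
  have "sqrt (1 - m\<^sup>2 * (sin x)\<^sup>2) \<le> 1" using rad_le1 by simp
  moreover have "sqrt (1 - m\<^sup>2 * (sin x)\<^sup>2) > 0" using rad_pos[OF assms] by simp
  ultimately show ?thesis by (simp add: gg_def)
qed

lemma gg_cont: fixes m :: real assumes "m\<^sup>2 < 1" shows "continuous_on S (gg m)"
proof -
  have "\<And>x::real. sqrt (1 - m\<^sup>2 * (sin x)\<^sup>2) \<noteq> 0" using rad_pos[OF assms] by (metis less_irrefl real_sqrt_eq_zero_cancel_iff)
  thus ?thesis unfolding gg_def by (intro continuous_intros) auto
qed

lemma gg_int: assumes "m\<^sup>2 < 1" shows "gg m integrable_on {a..b}"
  by (rule integrable_continuous_real) (rule gg_cont[OF assms])

lemma ellF_alt: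
  assumes "m\<^sup>2 < 1" "a \<le> 0" "a \<le> x"
  shows "ellF m x = integral {a..x} (gg m) - integral {a..0} (gg m)"
proof (cases "0 \<le> x")
  case True
  have "integral {a..0} (gg m) + integral {0..x} (gg m) = integral {a..x} (gg m)"
    using Henstock_Kurzweil_Integration.integral_combine[OF assms(2) True gg_int[OF assms(1)]] .
  moreover have "ellF m x = integral {0..x} (gg m)" using True unfolding ellF_def gg_def[abs_def] by simp
  ultimately show ?thesis by linarith
next
  case False
  hence x0: "x \<le> 0" by simp
  have "integral {a..x} (gg m) + integral {x..0} (gg m) = integral {a..0} (gg m)"
    using Henstock_Kurzweil_Integration.integral_combine[OF assms(3) x0 gg_int[OF assms(1)]] .
  moreover have "ellF m x = - integral {x..0} (gg m)" using False unfolding ellF_def gg_def[abs_def] by simp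
  ultimately show ?thesis by linarith
qed

lemma ellF_deriv:
  assumes "m\<^sup>2 < 1"
  shows "(ellF m has_real_derivative gg m x) (at x)"
proof -
  define a where "a = min 0 x - 1"
  have d0: "((\<lambda>y. integral {a..y} (gg m)) has_real_derivative gg m x) (at x within {a..x+1})"
    by (rule integral_has_real_derivative) (use assms in \<open>auto intro: gg_cont simp: a_def\<close>)
  have "x \<in> interior {a..x+1}" by (simp add: a_def)
  hence eq: "at x within {a..x+1} = at x" by (rule at_within_interior)
  have "((\<lambda>y. integral {a..y} (gg m)) has_real_derivative gg m x) (at x)"
    using d0 unfolding eq .
  hence d: "((\<lambda>y. integral {a..y} (gg m) - integral {a..0} (gg m)) has_real_derivative gg m x) (at x)"
    by (auto intro!: derivative_eq_intros)
  show ?thesis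
    by (rule has_field_derivative_transform_within_open[OF d, of "{a<..}"])
       (use assms in \<open>auto simp: a_def intro!: ellF_alt[symmetric]\<close>)
qed

lemma ellF_deriv_minus: assumes "m\<^sup>2 < 1"
  shows "((\<lambda>x. ellF m x - x) has_real_derivative gg m x - 1) (at x)"
  using ellF_deriv[OF assms] by (auto intro!: derivative_eq_intros)

lemma ellF_deriv_comp[derivative_intros]:
  assumes "m\<^sup>2 < 1" "(f has_real_derivative f') (at x within s)" "D = gg m (f x) * f'"
  shows "((\<lambda>y. ellF m (f y)) has_real_derivative D) (at x within s)"
  using DERIV_chain2[OF ellF_deriv[OF assms(1)] assms(2)] assms(3) by simp

lemma ellF_0: "ellF m 0 = 0" by (simp add: ellF_def)

lemma ellF_cont: assumes "m\<^sup>2 < 1" shows "isCont (ellF m) x"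
  using ellF_deriv[OF assms] DERIV_isCont by blast

lemma ellF_mono: assumes "m\<^sup>2 < 1" "x < y" shows "ellF m x < ellF m y"
  using DERIV_pos_imp_increasing[OF assms(2)] ellF_deriv[OF assms(1)] gg_pos[OF assms(1)] by blast

lemma ellF_mono_iff: assumes "m\<^sup>2 < 1" shows "ellF m x < ellF m y \<longleftrightarrow> x < y"
  using ellF_mono[OF assms] by (metis linorder_neq_iff order_less_asym)

lemma ellF_inj: assumes "m\<^sup>2 < 1" shows "ellF m x = ellF m y \<longleftrightarrow> x = y"
  using ellF_mono[OF assms] by (metis linorder_neq_iff order_less_irrefl)

lemma ellF_ge: assumes "m\<^sup>2 < 1" "0 \<le> x" shows "x \<le> ellF m x"
proof -
  have "ellF m 0 - 0 \<le> ellF m x - x"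
  proof (rule DERIV_nonneg_imp_nondecreasing[OF assms(2)])
    fix z show "\<exists>y. ((\<lambda>x. ellF m x - x) has_real_derivative y) (at z) \<and> 0 \<le> y"
      using ellF_deriv_minus[OF assms(1), of z] gg_ge1[OF assms(1), of z] by auto
  qed
  thus ?thesis by (simp add: ellF_0)
qed

lemma ellF_le: assumes "m\<^sup>2 < 1" "x \<le> 0" shows "ellF m x \<le> x"
proof -
  have "ellF m x - x \<le> ellF m 0 - 0"
  proof (rule DERIV_nonneg_imp_nondecreasing[OF assms(2)])
    fix z show "\<exists>y. ((\<lambda>x. ellF m x - x) has_real_derivative y) (at z) \<and> 0 \<le> y"
      using ellF_deriv_minus[OF assms(1), of z] gg_ge1[OF assms(1), of z] by auto
  qed
  thus ?thesis by (simp add: ellF_0)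
qed

lemma ellF_surj: assumes "m\<^sup>2 < 1" shows "\<exists>x. ellF m x = u"
proof (cases "0 \<le> u")
  case True
  then show ?thesis using IVT[of "ellF m" 0 u u] ellF_ge[OF assms True] ellF_cont[OF assms]
    by (auto simp: ellF_0)
next
  case False
  then show ?thesis using IVT[of "ellF m" u u 0] ellF_le[OF assms] ellF_cont[OF assms]
    by (auto simp: ellF_0)
qed

lemma ellF_jam: assumes "m\<^sup>2 < 1" shows "ellF m (jam m u) = u"
proof -
  obtain x where x: "ellF m x = u" using ellF_surj[OF assms] by blast
  have "jam m u = x" unfolding jam_def
    by (rule the_equality) (use x ellF_inj[OF assms] in auto)
  thus ?thesis using x by simp
qed

lemma jam_ellF: assumes "m\<^sup>2 < 1" shows "jam m (ellF m x) = x"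
  using ellF_jam[OF assms, of "ellF m x"] ellF_inj[OF assms] by blast

lemma jam_eqI: assumes "m\<^sup>2 < 1" "ellF m x = u" shows "jam m u = x"
  using jam_ellF[OF assms(1)] assms(2) by blast

lemma gg_shift: "gg m (x + pi) = gg m x" by (simp add: gg_def)
lemma gg_refl: "gg m (pi - x) = gg m x" by (simp add: gg_def)
lemma gg_neg: "gg m (- x) = gg m x" by (simp add: gg_def)

lemma ellF_shift: assumes "m\<^sup>2 < 1" shows "ellF m (x + pi) = ellF m x + ellF m pi"
proof -
  have "ellF m (x + pi) - ellF m x = ellF m (0 + pi) - ellF m 0"
    by (rule DERIV_isconst_all)
       (use assms in \<open>auto intro!: derivative_eq_intros ellF_deriv_comp simp: gg_shift\<close>)
  thus ?thesis by (simp add: ellF_0)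
qed

lemma ellF_odd: assumes "m\<^sup>2 < 1" shows "ellF m (- x) = - ellF m x"
proof -
  have "ellF m (- x) + ellF m x = ellF m (- 0) + ellF m 0"
    by (rule DERIV_isconst_all)
       (use assms in \<open>auto intro!: derivative_eq_intros ellF_deriv_comp simp: gg_neg\<close>)
  thus ?thesis by (simp add: ellF_0)
qed

lemma ellF_pi: assumes "m\<^sup>2 < 1" shows "ellF m pi = 2 * ellK m"
proof -
  have "ellF m (pi - x) + ellF m x = ellF m (pi - 0) + ellF m 0" for x
    by (rule DERIV_isconst_all)
       (use assms in \<open>auto intro!: derivative_eq_intros ellF_deriv_comp simp: gg_refl\<close>)
  from this[of "pi/2"] show ?thesis by (simp add: ellF_0 ellK_def)
qed


lemma jam_0: assumes "m\<^sup>2 < 1" shows "jam m 0 = 0"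
  by (rule jam_eqI[OF assms]) (simp add: ellF_0)

lemma ellK_pos: assumes "m\<^sup>2 < 1" shows "ellK m > 0"
  using ellF_ge[OF assms, of "pi/2"] pi_gt_zero unfolding ellK_def by linarith

lemma jam_K: assumes "m\<^sup>2 < 1" shows "jam m (ellK m) = pi/2"
  by (rule jam_eqI[OF assms]) (simp add: ellK_def)

lemma jam_shift: assumes "m\<^sup>2 < 1" shows "jam m (u + 2 * ellK m) = jam m u + pi"
  by (rule jam_eqI[OF assms]) (simp add: ellF_shift[OF assms] ellF_pi[OF assms] ellF_jam[OF assms])

lemma jam_odd: assumes "m\<^sup>2 < 1" shows "jam m (- u) = - jam m u"
  by (rule jam_eqI[OF assms]) (simp add: ellF_odd[OF assms] ellF_jam[OF assms])

lemma jam_mono: assumes "m\<^sup>2 < 1" "u < v" shows "jam m u < jam m v"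
proof (rule ccontr)
  assume "\<not> jam m u < jam m v"
  hence "jam m v \<le> jam m u" by simp
  hence "ellF m (jam m v) \<le> ellF m (jam m u)"
    using ellF_mono[OF assms(1)] by (metis order_le_less)
  thus False using assms(2) by (simp add: ellF_jam[OF assms(1)])
qed

lemma jam_shift_nat: assumes "m\<^sup>2 < 1"
  shows "jam m (u + 2 * ellK m * real n) = jam m u + pi * real n"
proof (induction n)
  case 0 then show ?case by simp
next
  case (Suc n)
  have "jam m (u + 2 * ellK m * real (Suc n)) = jam m ((u + 2 * ellK m * real n) + 2 * ellK m)"
    by (simp add: algebra_simps)
  also have "\<dots> = jam m u + pi * real n + pi" using Suc by (simp add: jam_shift[OF assms])
  finally show ?case by (simp add: algebra_simps)
qed

lemma jdn_alt: "jdn m u = 1 / gg m (jam m u)"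
  by (simp add: jdn_def gg_def jsn_def)

lemma jdn_pos: assumes "m\<^sup>2 < 1" shows "jdn m u > 0"
  using rad_pos[OF assms] by (simp add: jdn_def jsn_def)

lemma jdn_sq: assumes "m\<^sup>2 < 1" shows "(jdn m u)\<^sup>2 = 1 - m\<^sup>2 * (jsn m u)\<^sup>2"
  using rad_pos[OF assms] by (simp add: jdn_def jsn_def less_imp_le)

lemma jsn_cn_sq: "(jsn m u)\<^sup>2 + (jcn m u)\<^sup>2 = 1"
  by (simp add: jsn_def jcn_def)

lemma jam_cont: assumes "m\<^sup>2 < 1" shows "isCont (jam m) u"
proof -
  have "isCont (jam m) (ellF m (jam m u))"
    by (rule isCont_inverse_function[where d=1])
       (auto simp: jam_ellF[OF assms] ellF_cont[OF assms])
  thus ?thesis by (simp add: ellF_jam[OF assms])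
qed

lemma jam_deriv: assumes "m\<^sup>2 < 1" shows "(jam m has_real_derivative jdn m u) (at u)"
proof -
  have "(jam m has_real_derivative inverse (gg m (jam m u))) (at u)"
    by (rule DERIV_inverse_function[where a="u-1" and b="u+1" and f="ellF m"])
       (use gg_pos[OF assms] in \<open>auto simp: ellF_deriv[OF assms] ellF_jam[OF assms] jam_cont[OF assms] less_imp_neq[symmetric]\<close>)
  thus ?thesis by (simp add: jdn_alt divide_inverse)
qed

lemma jsn_deriv: assumes "m\<^sup>2 < 1" shows "(jsn m has_real_derivative jcn m u * jdn m u) (at u)"
proof -
  have "((\<lambda>u. sin (jam m u)) has_real_derivative cos (jam m u) * jdn m u) (at u)"
    using DERIV_chain2[OF DERIV_sin jam_deriv[OF assms]] .
  thus ?thesis unfolding jsn_def[abs_def] jcn_def .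
qed

lemma jcn_deriv: assumes "m\<^sup>2 < 1" shows "(jcn m has_real_derivative - jsn m u * jdn m u) (at u)"
proof -
  have "((\<lambda>u. cos (jam m u)) has_real_derivative - sin (jam m u) * jdn m u) (at u)"
    using DERIV_chain2[OF DERIV_cos jam_deriv[OF assms]] by simp
  thus ?thesis unfolding jsn_def jcn_def[abs_def] .
qed

lemma jdn_deriv: assumes "m\<^sup>2 < 1" shows "(jdn m has_real_derivative - (m\<^sup>2 * jsn m u * jcn m u)) (at u)"
proof -
  have r: "1 - m\<^sup>2 * (jsn m u)\<^sup>2 > 0" using rad_pos[OF assms] by (simp add: jsn_def)
  have "((\<lambda>u. sqrt (1 - m\<^sup>2 * (jsn m u)\<^sup>2)) has_real_derivative
      - (m\<^sup>2 * jsn m u * jcn m u * jdn m u) / sqrt (1 - m\<^sup>2 * (jsn m u)\<^sup>2)) (at u)"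
    using r by (auto intro!: derivative_eq_intros jsn_deriv[OF assms] simp: power2_eq_square divide_simps)
  moreover have "- (m\<^sup>2 * jsn m u * jcn m u * jdn m u) / sqrt (1 - m\<^sup>2 * (jsn m u)\<^sup>2)
     = - (m\<^sup>2 * jsn m u * jcn m u)"
    using jdn_pos[OF assms, of u] by (simp add: jdn_def[symmetric])
  ultimately show ?thesis unfolding jdn_def[abs_def] by simp
qed

lemma jsn_dc[derivative_intros]:
  assumes "m\<^sup>2 < 1" "(f has_real_derivative f') (at x within s)" "D = jcn m (f x) * jdn m (f x) * f'"
  shows "((\<lambda>y. jsn m (f y)) has_real_derivative D) (at x within s)"
  using DERIV_chain2[OF jsn_deriv[OF assms(1)] assms(2)] assms(3) by simp
lemma jcn_dc[derivative_intros]: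
  assumes "m\<^sup>2 < 1" "(f has_real_derivative f') (at x within s)" "D = - jsn m (f x) * jdn m (f x) * f'"
  shows "((\<lambda>y. jcn m (f y)) has_real_derivative D) (at x within s)"
  using DERIV_chain2[OF jcn_deriv[OF assms(1)] assms(2)] assms(3) by simp
lemma jdn_dc[derivative_intros]:
  assumes "m\<^sup>2 < 1" "(f has_real_derivative f') (at x within s)" "D = - (m\<^sup>2 * jsn m (f x) * jcn m (f x)) * f'"
  shows "((\<lambda>y. jdn m (f y)) has_real_derivative D) (at x within s)"
  using DERIV_chain2[OF jdn_deriv[OF assms(1)] assms(2)] assms(3) by simp

lemma jsn_0: assumes "m\<^sup>2 < 1" shows "jsn m 0 = 0" by (simp add: jsn_def jam_0[OF assms])
lemma jcn_0: assumes "m\<^sup>2 < 1" shows "jcn m 0 = 1" by (simp add: jcn_def jam_0[OF assms])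
lemma jdn_0: assumes "m\<^sup>2 < 1" shows "jdn m 0 = 1" by (simp add: jdn_def jsn_0[OF assms])
lemma jsn_odd: assumes "m\<^sup>2 < 1" shows "jsn m (-u) = - jsn m u" by (simp add: jsn_def jam_odd[OF assms])
lemma jcn_even: assumes "m\<^sup>2 < 1" shows "jcn m (-u) = jcn m u" by (simp add: jcn_def jam_odd[OF assms])
lemma jdn_even: assumes "m\<^sup>2 < 1" shows "jdn m (-u) = jdn m u" by (simp add: jdn_def jsn_odd[OF assms])

lemma den_pos: fixes m a b :: real assumes "m\<^sup>2 < 1" "a\<^sup>2 \<le> 1" "b\<^sup>2 \<le> 1"
  shows "1 - m\<^sup>2 * a\<^sup>2 * b\<^sup>2 > 0"
proof -
  have "a\<^sup>2 * b\<^sup>2 \<le> 1" using assms(2,3) by (metis mult_le_one zero_le_power2)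
  hence "m\<^sup>2 * (a\<^sup>2 * b\<^sup>2) \<le> m\<^sup>2" by (simp add: mult_left_le)
  thus ?thesis using assms(1) by (simp add: mult.assoc)
qed

lemma jsn_sq_le: "(jsn m u)\<^sup>2 \<le> 1"
  using jsn_cn_sq[of m u] by (metis le_add_same_cancel1 zero_le_power2)


lemma add_core:
  assumes m2: "m\<^sup>2 < 1"
  shows "jsn m (u+v) = (jsn m u * jcn m v * jdn m v + jsn m v * jcn m u * jdn m u) / (1 - m\<^sup>2 * (jsn m u)\<^sup>2 * (jsn m v)\<^sup>2)
       \<and> jcn m (u+v) = (jcn m u * jcn m v - jsn m u * jsn m v * jdn m u * jdn m v) / (1 - m\<^sup>2 * (jsn m u)\<^sup>2 * (jsn m v)\<^sup>2)"
proof -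
  define s where "s = u + v"
  define N where "N = (\<lambda>x. jsn m x * jcn m (s-x) * jdn m (s-x) + jsn m (s-x) * jcn m x * jdn m x)"
  define M where "M = (\<lambda>x. jcn m x * jcn m (s-x) - jsn m x * jsn m (s-x) * jdn m x * jdn m (s-x))"
  define Dn where "Dn = (\<lambda>x. 1 - m\<^sup>2 * (jsn m x)\<^sup>2 * (jsn m (s-x))\<^sup>2)"
  have Dpos: "Dn x > 0" for x unfolding Dn_def by (rule den_pos[OF m2 jsn_sq_le jsn_sq_le])
  have derivs: "((\<lambda>x. N x / Dn x) has_real_derivative 0) (at x) \<and> ((\<lambda>x. M x / Dn x) has_real_derivative 0) (at x)" for x
  proof -
    define s1 where "s1 = jsn m x"
    define c1 where "c1 = jcn m x"
    define d1 where "d1 = jdn m x"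
    define s2 where "s2 = jsn m (s-x)"
    define c2 where "c2 = jcn m (s-x)"
    define d2 where "d2 = jdn m (s-x)"
    have r1: "c1^2 = 1 - s1^2" using jsn_cn_sq[of m x] unfolding s1_def c1_def by linarith
    have r2: "c2^2 = 1 - s2^2" using jsn_cn_sq[of m "s-x"] unfolding s2_def c2_def by linarith
    have r3: "d1^2 = 1 - m^2 * s1^2" using jdn_sq[OF m2, of x] unfolding s1_def d1_def .
    have r4: "d2^2 = 1 - m^2 * s2^2" using jdn_sq[OF m2, of "s-x"] unfolding s2_def d2_def .
    have dN: "(N has_real_derivative
       c1 * d1 * c2 * d2 + s1 * (s2 * d2) * d2 + s1 * c2 * (m\<^sup>2 * s2 * c2)
       + (- c2 * d2) * c1 * d1 + s2 * (- s1 * d1) * d1 + s2 * c1 * (- (m\<^sup>2 * s1 * c1))) (at x)"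
      unfolding N_def s1_def c1_def d1_def s2_def c2_def d2_def
      by (auto intro!: derivative_eq_intros simp: m2 algebra_simps)
    have dM: "(M has_real_derivative
       (- s1 * d1) * c2 + c1 * (s2 * d2) - ((c1 * d1) * s2 * d1 * d2 + s1 * (- c2 * d2) * d1 * d2
        + s1 * s2 * (- (m\<^sup>2 * s1 * c1)) * d2 + s1 * s2 * d1 * (m\<^sup>2 * s2 * c2))) (at x)"
      unfolding M_def s1_def c1_def d1_def s2_def c2_def d2_def
      by (auto intro!: derivative_eq_intros simp: m2 algebra_simps)
    have dD: "(Dn has_real_derivative
       - (m\<^sup>2 * (2 * s1 * (c1 * d1) * s2^2 + s1^2 * (2 * s2 * (- c2 * d2))))) (at x)"
      unfolding Dn_def s1_def c1_def d1_def s2_def c2_def d2_def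
      by (auto intro!: derivative_eq_intros simp: m2 m2[unfolded power2_eq_square] algebra_simps power2_eq_square)
    have Nx: "N x = s1 * c2 * d2 + s2 * c1 * d1" unfolding N_def s1_def c1_def d1_def s2_def c2_def d2_def by simp
    have Mx: "M x = c1 * c2 - s1 * s2 * d1 * d2" unfolding M_def s1_def c1_def d1_def s2_def c2_def d2_def by simp
    have Dx: "Dn x = 1 - m^2 * s1^2 * s2^2" unfolding Dn_def s1_def s2_def by simp
    have e1: "(c1 * d1 * c2 * d2 + s1 * (s2 * d2) * d2 + s1 * c2 * (m\<^sup>2 * s2 * c2)
       + (- c2 * d2) * c1 * d1 + s2 * (- s1 * d1) * d1 + s2 * c1 * (- (m\<^sup>2 * s1 * c1))) * (1 - m^2 * s1^2 * s2^2)
       - (s1 * c2 * d2 + s2 * c1 * d1) * (- (m\<^sup>2 * (2 * s1 * (c1 * d1) * s2^2 + s1^2 * (2 * s2 * (- c2 * d2))))) = 0"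
      using r1 r2 r3 r4 by algebra
    have e2: "((- s1 * d1) * c2 + c1 * (s2 * d2) - ((c1 * d1) * s2 * d1 * d2 + s1 * (- c2 * d2) * d1 * d2
        + s1 * s2 * (- (m\<^sup>2 * s1 * c1)) * d2 + s1 * s2 * d1 * (m\<^sup>2 * s2 * c2))) * (1 - m^2 * s1^2 * s2^2)
       - (c1 * c2 - s1 * s2 * d1 * d2) * (- (m\<^sup>2 * (2 * s1 * (c1 * d1) * s2^2 + s1^2 * (2 * s2 * (- c2 * d2))))) = 0"
      using r1 r2 r3 r4 by algebra
    have ne: "Dn x \<noteq> 0" using Dpos[of x] by simp
    show ?thesis
      using DERIV_divide[OF dN dD ne] DERIV_divide[OF dM dD ne] unfolding Nx Mx Dx
      using e1 e2 by simp
  qed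
  have cN: "N x / Dn x = N 0 / Dn 0" for x
    by (rule DERIV_isconst_all) (use derivs in blast)
  have cM: "M x / Dn x = M 0 / Dn 0" for x
    by (rule DERIV_isconst_all) (use derivs in blast)
  have N0: "N 0 / Dn 0 = jsn m s" and M0: "M 0 / Dn 0 = jcn m s"
    unfolding N_def M_def Dn_def by (simp_all add: jsn_0[OF m2] jcn_0[OF m2] jdn_0[OF m2])
  have sv: "s - u = v" by (simp add: s_def)
  show ?thesis using cN[of u] cM[of u] N0 M0 unfolding N_def M_def Dn_def sv
    by (simp add: s_def mult_ac)
qed


definition cr :: "complex \<Rightarrow> complex \<Rightarrow> real" where
  "cr z w = Re z * Im w - Im z * Re w"

lemma line_mem: "z \<in> line_through p q \<longleftrightarrow> (\<exists>t. z = p + of_real t * (q - p))"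
  by (auto simp: line_through_def)

lemma line_sym1: "z \<in> line_through p q \<Longrightarrow> z \<in> line_through q p"
proof -
  assume "z \<in> line_through p q"
  then obtain t where z: "z = p + of_real t * (q - p)" by (auto simp: line_mem)
  have "z = q + of_real (1 - t) * (p - q)" unfolding z by (simp add: algebra_simps)
  thus ?thesis unfolding line_mem by blast
qed

lemma line_sym: "line_through p q = line_through q p"
  using line_sym1 by blast

lemma ell_mem: "z \<in> ellipse a b \<longleftrightarrow> (Re z / a)\<^sup>2 + (Im z / b)\<^sup>2 = 1"
  by (simp add: ellipse_def)

lemma perp_par:
  fixes n1 n2 w1 w2 z1 z2 :: real
  assumes "n1 * w1 + n2 * w2 = 0" "n1 * z1 + n2 * z2 = 0" "n1 \<noteq> 0 \<or> n2 \<noteq> 0"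
  shows "z1 * w2 - z2 * w1 = 0"
proof -
  have a: "n1 * (z1 * w2 - z2 * w1) = 0" using assms(1,2) by algebra
  have b: "n2 * (z1 * w2 - z2 * w1) = 0" using assms(1,2) by algebra
  show ?thesis using a b assms(3) by auto
qed

lemma tangent_normal:
  fixes ac bc h n1 n2 :: real and P Q :: complex
  assumes ac: "ac > 0" and bc: "bc > 0" and h: "h \<noteq> 0"
    and hh: "h\<^sup>2 = ac\<^sup>2 * n1\<^sup>2 + bc\<^sup>2 * n2\<^sup>2" and PQ: "P \<noteq> Q"
    and nP: "n1 * Re P + n2 * Im P = h" and nQ: "n1 * Re Q + n2 * Im Q = h"
  shows "tangent_to (line_through P Q) ac bc"
proof -
  define T where "T = Complex (ac\<^sup>2 * n1 / h) (bc\<^sup>2 * n2 / h)"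
  have online: "n1 * Re z + n2 * Im z = h" if zl: "z \<in> line_through P Q" for z
  proof -
    obtain t where z: "z = P + of_real t * (Q - P)" using zl by (auto simp: line_mem)
    have "n1 * Re z + n2 * Im z = (n1 * Re P + n2 * Im P) + t * ((n1 * Re Q + n2 * Im Q) - (n1 * Re P + n2 * Im P))"
      unfolding z by (simp add: algebra_simps)
    thus ?thesis using nP nQ by simp
  qed
  have nT: "n1 * Re T + n2 * Im T = h"
  proof -
    have "n1 * Re T + n2 * Im T = (ac\<^sup>2 * n1\<^sup>2 + bc\<^sup>2 * n2\<^sup>2) / h"
      by (simp add: T_def power2_eq_square add_divide_distrib mult_ac)
    also have "\<dots> = h\<^sup>2 / h" by (simp only: hh)
    also have "\<dots> = h" using h by (simp add: power2_eq_square)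
    finally show ?thesis .
  qed
  have Tell: "T \<in> ellipse ac bc"
  proof -
    have "(Re T / ac)\<^sup>2 + (Im T / bc)\<^sup>2 = (ac\<^sup>2 * n1\<^sup>2 + bc\<^sup>2 * n2\<^sup>2) / h\<^sup>2"
      using ac bc by (simp add: T_def power2_eq_square field_simps add_divide_distrib)
    also have "\<dots> = h\<^sup>2 / h\<^sup>2" by (simp only: hh)
    also have "\<dots> = 1" using h by simp
    finally show ?thesis by (simp add: ell_mem)
  qed
  have nn: "n1 \<noteq> 0 \<or> n2 \<noteq> 0" using nP h by auto
  define w1 where "w1 = Re Q - Re P"
  define w2 where "w2 = Im Q - Im P"
  define z1 where "z1 = Re T - Re P"
  define z2 where "z2 = Im T - Im P"
  have w: "w1 \<noteq> 0 \<or> w2 \<noteq> 0" using PQ by (auto simp: w1_def w2_def complex_eq_iff)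
  have ww: "w1\<^sup>2 + w2\<^sup>2 > 0" using w by (simp add: sum_power2_gt_zero_iff)
  have S0: "w1\<^sup>2 + w2\<^sup>2 \<noteq> 0" using ww by linarith
  have nw: "n1 * w1 + n2 * w2 = 0" using nP nQ unfolding w1_def w2_def by (simp add: algebra_simps)
  have nz: "n1 * z1 + n2 * z2 = 0" using nP nT unfolding z1_def z2_def by (simp add: algebra_simps)
  have crs: "z1 * w2 - z2 * w1 = 0" by (rule perp_par[OF nw nz nn])
  define t where "t = (z1 * w1 + z2 * w2) / (w1\<^sup>2 + w2\<^sup>2)"
  have t1: "t * w1 = z1"
  proof -
    have eq: "(z1 * w1 + z2 * w2) * w1 = z1 * (w1\<^sup>2 + w2\<^sup>2)" using crs by algebra
    have "t * w1 = ((z1 * w1 + z2 * w2) * w1) / (w1\<^sup>2 + w2\<^sup>2)" unfolding t_def by simp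
    also have "\<dots> = z1 * (w1\<^sup>2 + w2\<^sup>2) / (w1\<^sup>2 + w2\<^sup>2)" by (simp only: eq)
    also have "\<dots> = z1" by (rule nonzero_mult_div_cancel_right[OF S0])
    finally show ?thesis .
  qed
  have t2: "t * w2 = z2"
  proof -
    have eq: "(z1 * w1 + z2 * w2) * w2 = z2 * (w1\<^sup>2 + w2\<^sup>2)" using crs by algebra
    have "t * w2 = ((z1 * w1 + z2 * w2) * w2) / (w1\<^sup>2 + w2\<^sup>2)" unfolding t_def by simp
    also have "\<dots> = z2 * (w1\<^sup>2 + w2\<^sup>2) / (w1\<^sup>2 + w2\<^sup>2)" by (simp only: eq)
    also have "\<dots> = z2" by (rule nonzero_mult_div_cancel_right[OF S0])
    finally show ?thesis .
  qed
  have Tline: "T \<in> line_through P Q"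
    unfolding line_mem
    by (rule exI[of _ t]) (use t1 t2 in \<open>simp add: complex_eq_iff w1_def w2_def z1_def z2_def\<close>)
  have uniq: "z = T" if "z \<in> line_through P Q" "z \<in> ellipse ac bc" for z
  proof -
    define x where "x = Re z"
    define y where "y = Im z"
    have e: "(x / ac)\<^sup>2 + (y / bc)\<^sup>2 = 1" using that(2) by (simp add: ell_mem x_def y_def)
    have l: "n1 * x + n2 * y = h" using online[OF that(1)] by (simp add: x_def y_def)
    define X where "X = x / ac"
    define Y where "Y = y / bc"
    define A1 where "A1 = ac * n1 / h"
    define A2 where "A2 = bc * n2 / h"
    have s1: "X * A1 + Y * A2 = (n1 * x + n2 * y) / h"
      using ac bc unfolding X_def Y_def A1_def A2_def by (simp add: add_divide_distrib mult_ac)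
    have s2: "A1\<^sup>2 + A2\<^sup>2 = (ac\<^sup>2 * n1\<^sup>2 + bc\<^sup>2 * n2\<^sup>2) / h\<^sup>2"
      unfolding A1_def A2_def by (simp add: power_divide power_mult_distrib add_divide_distrib)
    have s3: "(X - A1)\<^sup>2 + (Y - A2)\<^sup>2 = (X\<^sup>2 + Y\<^sup>2) - 2 * (X * A1 + Y * A2) + (A1\<^sup>2 + A2\<^sup>2)"
      by (simp add: power2_diff)
    have "(x / ac - ac * n1 / h)\<^sup>2 + (y / bc - bc * n2 / h)\<^sup>2
        = ((x / ac)\<^sup>2 + (y / bc)\<^sup>2) - 2 * ((n1 * x + n2 * y) / h) + (ac\<^sup>2 * n1\<^sup>2 + bc\<^sup>2 * n2\<^sup>2) / h\<^sup>2"
      using s3 unfolding s1 s2 by (simp add: X_def Y_def A1_def A2_def)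
    also have "\<dots> = 1 - 2 * h / h + h\<^sup>2 / h\<^sup>2" by (simp only: e l hh)
    also have "\<dots> = 0" using h by simp
    finally have "(x / ac - ac * n1 / h)\<^sup>2 + (y / bc - bc * n2 / h)\<^sup>2 = 0" .
    hence "x / ac - ac * n1 / h = 0" "y / bc - bc * n2 / h = 0"
      by (simp_all add: sum_power2_eq_zero_iff)
    hence "x = ac\<^sup>2 * n1 / h" "y = bc\<^sup>2 * n2 / h"
      using ac bc h by (simp_all add: divide_simps power2_eq_square)
    thus ?thesis by (simp add: complex_eq_iff T_def x_def y_def)
  qed
  show ?thesis unfolding tangent_to_def
  proof (rule ex1I[of _ T])
    show "T \<in> line_through P Q \<and> T \<in> ellipse ac bc" using Tline Tell by blast
  next
    fix z assume "z \<in> line_through P Q \<and> z \<in> ellipse ac bc"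
    thus "z = T" using uniq by blast
  qed
qed


lemma line_ellipse_poly:
  fixes a b x0 y0 v1 v2 t :: real
  assumes "a > 0" "b > 0"
  shows "((x0 + t * v1) / a)\<^sup>2 + ((y0 + t * v2) / b)\<^sup>2 - 1
       = (v1\<^sup>2 / a\<^sup>2 + v2\<^sup>2 / b\<^sup>2) * t\<^sup>2 + 2 * (x0 * v1 / a\<^sup>2 + y0 * v2 / b\<^sup>2) * t
         + (x0\<^sup>2 / a\<^sup>2 + y0\<^sup>2 / b\<^sup>2 - 1)"
  using assms by (simp add: power_divide power2_sum power_mult_distrib add_divide_distrib algebra_simps power2_eq_square)

lemma line_pt: "Re (X + of_real t * (Y - X)) = Re X + t * (Re Y - Re X)"
  "Im (X + of_real t * (Y - X)) = Im X + t * (Im Y - Im X)"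
  by simp_all

lemma tangent_disc:
  fixes ac bc :: real and X Y :: complex
  assumes ac: "ac > 0" and bc: "bc > 0" and XY: "X \<noteq> Y"
    and tg: "tangent_to (line_through X Y) ac bc"
  shows "(Re X * (Re Y - Re X) / ac\<^sup>2 + Im X * (Im Y - Im X) / bc\<^sup>2)\<^sup>2
       = ((Re Y - Re X)\<^sup>2 / ac\<^sup>2 + (Im Y - Im X)\<^sup>2 / bc\<^sup>2) * ((Re X)\<^sup>2 / ac\<^sup>2 + (Im X)\<^sup>2 / bc\<^sup>2 - 1)"
proof -
  define v1 where "v1 = Re Y - Re X"
  define v2 where "v2 = Im Y - Im X"
  define A where "A = v1\<^sup>2 / ac\<^sup>2 + v2\<^sup>2 / bc\<^sup>2"
  define B where "B = Re X * v1 / ac\<^sup>2 + Im X * v2 / bc\<^sup>2"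
  define C where "C = (Re X)\<^sup>2 / ac\<^sup>2 + (Im X)\<^sup>2 / bc\<^sup>2 - 1"
  define z where "z = (\<lambda>t::real. X + of_real t * (Y - X))"
  have zl: "z t \<in> line_through X Y" for t unfolding z_def line_mem by blast
  have ze: "z t \<in> ellipse ac bc \<longleftrightarrow> A * t\<^sup>2 + 2 * B * t + C = 0" for t
  proof -
    have "z t \<in> ellipse ac bc \<longleftrightarrow> ((Re X + t * v1) / ac)\<^sup>2 + ((Im X + t * v2) / bc)\<^sup>2 - 1 = 0"
      unfolding ell_mem z_def line_pt v1_def v2_def by simp
    also have "\<dots> \<longleftrightarrow> A * t\<^sup>2 + 2 * B * t + C = 0"
      unfolding line_ellipse_poly[OF ac bc] A_def B_def C_def by simp
    finally show ?thesis .
  qed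
  have vnz: "v1 \<noteq> 0 \<or> v2 \<noteq> 0" using XY by (auto simp: v1_def v2_def complex_eq_iff)
  have Apos: "A > 0"
  proof -
    have "v1\<^sup>2 / ac\<^sup>2 > 0 \<or> v2\<^sup>2 / bc\<^sup>2 > 0" using vnz ac bc by auto
    moreover have "v1\<^sup>2 / ac\<^sup>2 \<ge> 0" "v2\<^sup>2 / bc\<^sup>2 \<ge> 0" by simp_all
    ultimately show ?thesis unfolding A_def by linarith
  qed
  have zinj: "z s = z t \<Longrightarrow> s = t" for s t
  proof -
    assume "z s = z t"
    hence "of_real (s - t) * (Y - X) = 0" unfolding z_def by (simp add: algebra_simps)
    thus "s = t" using XY by simp
  qed
  obtain z0 where z0: "z0 \<in> line_through X Y" "z0 \<in> ellipse ac bc"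
    using tg unfolding tangent_to_def by blast
  then obtain t0 where t0: "z0 = z t0" unfolding line_mem z_def by blast
  have root0: "A * t0\<^sup>2 + 2 * B * t0 + C = 0" using ze z0(2) t0 by simp
  have ge: "B\<^sup>2 \<ge> A * C"
  proof -
    have "A * (A * t0\<^sup>2 + 2 * B * t0 + C) = (A * t0 + B)\<^sup>2 - (B\<^sup>2 - A * C)"
      by (simp add: power2_eq_square algebra_simps)
    hence "(A * t0 + B)\<^sup>2 = B\<^sup>2 - A * C" using root0 by simp
    thus ?thesis by (metis diff_ge_0_iff_ge zero_le_power2)
  qed
  have le: "\<not> B\<^sup>2 > A * C"
  proof
    assume gt: "B\<^sup>2 > A * C"
    define r where "r = sqrt (B\<^sup>2 - A * C)"
    have rpos: "r > 0" using gt by (simp add: r_def)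
    have rr: "r\<^sup>2 = B\<^sup>2 - A * C" using gt by (simp add: r_def)
    define t1 where "t1 = (- B + r) / A"
    define t2 where "t2 = (- B - r) / A"
    have "A * t1\<^sup>2 + 2 * B * t1 + C = ((- B + r)\<^sup>2 + 2 * B * (- B + r) + A * C) / A"
      using Apos by (simp add: t1_def power2_eq_square field_simps)
    also have "\<dots> = 0" using rr by (simp add: power2_eq_square algebra_simps)
    finally have r1: "A * t1\<^sup>2 + 2 * B * t1 + C = 0" .
    have "A * t2\<^sup>2 + 2 * B * t2 + C = ((- B - r)\<^sup>2 + 2 * B * (- B - r) + A * C) / A"
      using Apos by (simp add: t2_def power2_eq_square field_simps)
    also have "\<dots> = 0" using rr by (simp add: power2_eq_square algebra_simps)
    finally have r2: "A * t2\<^sup>2 + 2 * B * t2 + C = 0" .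
    have "t1 \<noteq> t2" using rpos Apos by (simp add: t1_def t2_def divide_simps)
    hence "z t1 \<noteq> z t2" using zinj by blast
    moreover have "z t1 \<in> line_through X Y \<and> z t1 \<in> ellipse ac bc" using zl ze r1 by blast
    moreover have "z t2 \<in> line_through X Y \<and> z t2 \<in> ellipse ac bc" using zl ze r2 by blast
    ultimately show False using tg unfolding tangent_to_def by blast
  qed
  have "B\<^sup>2 = A * C" using ge le by linarith
  thus ?thesis unfolding A_def B_def C_def v1_def v2_def .
qed

lemma quad_two_roots:
  fixes p q r a1 a2 b1 b2 w1 w2 v1 v2 :: real
  assumes "p * a1\<^sup>2 + q * a1 * a2 + r * a2\<^sup>2 = 0"
    and "p * b1\<^sup>2 + q * b1 * b2 + r * b2\<^sup>2 = 0"
    and "p * w1\<^sup>2 + q * w1 * w2 + r * w2\<^sup>2 \<noteq> 0"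
    and "a1 * b2 - a2 * b1 \<noteq> 0"
    and "p * v1\<^sup>2 + q * v1 * v2 + r * v2\<^sup>2 = 0"
  shows "v1 * a2 - v2 * a1 = 0 \<or> v1 * b2 - v2 * b1 = 0"
proof -
  define k where "k = a1 * b2 - a2 * b1"
  define Bl where "Bl = 2 * p * a1 * b1 + q * (a1 * b2 + a2 * b1) + 2 * r * a2 * b2"
  have id: "k\<^sup>2 * (p * x1\<^sup>2 + q * x1 * x2 + r * x2\<^sup>2)
      = (x1 * b2 - x2 * b1)\<^sup>2 * (p * a1\<^sup>2 + q * a1 * a2 + r * a2\<^sup>2)
        + (a1 * x2 - a2 * x1)\<^sup>2 * (p * b1\<^sup>2 + q * b1 * b2 + r * b2\<^sup>2)
        + (x1 * b2 - x2 * b1) * (a1 * x2 - a2 * x1) * Bl" for x1 x2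
    unfolding k_def Bl_def by algebra
  have w: "k\<^sup>2 * (p * w1\<^sup>2 + q * w1 * w2 + r * w2\<^sup>2) = (w1 * b2 - w2 * b1) * (a1 * w2 - a2 * w1) * Bl"
    using id[of w1 w2] assms(1,2) by simp
  have "k\<^sup>2 * (p * w1\<^sup>2 + q * w1 * w2 + r * w2\<^sup>2) \<noteq> 0" using assms(3,4) by (simp add: k_def)
  hence Bl: "Bl \<noteq> 0" using w by auto
  have "(v1 * b2 - v2 * b1) * (a1 * v2 - a2 * v1) * Bl = 0"
    using id[of v1 v2] assms(1,2,5) by simp
  hence "(v1 * b2 - v2 * b1) = 0 \<or> (a1 * v2 - a2 * v1) = 0" using Bl by simp
  thus ?thesis by (auto simp: algebra_simps)
qed

lemma chord_param:
  fixes ae be \<alpha> :: real and X w :: complex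
  assumes ae: "ae > 0" and be: "be > 0"
    and X: "X \<in> ellipse ae be" and Xw: "X + w \<in> ellipse ae be"
    and Xa: "X + of_real \<alpha> * w \<in> ellipse ae be" and w: "w \<noteq> 0"
  shows "\<alpha> = 0 \<or> \<alpha> = 1"
proof -
  define Ae where "Ae = (Re w)\<^sup>2 / ae\<^sup>2 + (Im w)\<^sup>2 / be\<^sup>2"
  define Be where "Be = Re X * Re w / ae\<^sup>2 + Im X * Im w / be\<^sup>2"
  have E: "X + of_real t * w \<in> ellipse ae be \<longleftrightarrow> Ae * t\<^sup>2 + 2 * Be * t = 0" for t
  proof -
    have C0: "(Re X)\<^sup>2 / ae\<^sup>2 + (Im X)\<^sup>2 / be\<^sup>2 - 1 = 0" using X by (simp add: ell_mem power_divide)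
    have "X + of_real t * w \<in> ellipse ae be \<longleftrightarrow> ((Re X + t * Re w) / ae)\<^sup>2 + ((Im X + t * Im w) / be)\<^sup>2 - 1 = 0"
      by (simp add: ell_mem)
    also have "\<dots> \<longleftrightarrow> Ae * t\<^sup>2 + 2 * Be * t + ((Re X)\<^sup>2 / ae\<^sup>2 + (Im X)\<^sup>2 / be\<^sup>2 - 1) = 0"
      unfolding line_ellipse_poly[OF ae be] Ae_def Be_def by simp
    finally show ?thesis using C0 by simp
  qed
  have Apos: "Ae > 0"
  proof -
    have "Re w \<noteq> 0 \<or> Im w \<noteq> 0" using w by (auto simp: complex_eq_iff)
    hence "(Re w)\<^sup>2 / ae\<^sup>2 > 0 \<or> (Im w)\<^sup>2 / be\<^sup>2 > 0" using ae be by auto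
    moreover have "(Re w)\<^sup>2 / ae\<^sup>2 \<ge> 0" "(Im w)\<^sup>2 / be\<^sup>2 \<ge> 0" by simp_all
    ultimately show ?thesis unfolding Ae_def by linarith
  qed
  have e1: "Ae + 2 * Be = 0" using E[of 1] Xw by simp
  have e2: "Ae * \<alpha>\<^sup>2 + 2 * Be * \<alpha> = 0" using E[of \<alpha>] Xa by simp
  have "Ae * (\<alpha> * (\<alpha> - 1)) = 0" using e1 e2 by algebra
  thus ?thesis using Apos by auto
qed

lemma collinear_on_ellipse:
  fixes ae be :: real and X Y Z :: complex
  assumes ae: "ae > 0" and be: "be > 0"
    and X: "X \<in> ellipse ae be" and Y: "Y \<in> ellipse ae be" and Z: "Z \<in> ellipse ae be"
    and YX: "Y \<noteq> X" and ZX: "Z \<noteq> X" and c: "cr (Y - X) (Z - X) = 0"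
  shows "Y = Z"
proof -
  define w where "w = Z - X"
  define z1 where "z1 = Re Y - Re X"
  define z2 where "z2 = Im Y - Im X"
  define w1 where "w1 = Re w"
  define w2 where "w2 = Im w"
  have wnz: "w \<noteq> 0" using ZX by (simp add: w_def)
  have ww: "w1\<^sup>2 + w2\<^sup>2 \<noteq> 0" using wnz by (simp add: w1_def w2_def complex_eq_iff sum_power2_eq_zero_iff)
  have crs: "z1 * w2 - z2 * w1 = 0" using c by (simp add: cr_def z1_def z2_def w1_def w2_def w_def)
  define \<alpha> where "\<alpha> = (z1 * w1 + z2 * w2) / (w1\<^sup>2 + w2\<^sup>2)"
  have a1: "\<alpha> * w1 = z1"
  proof -
    have eq: "(z1 * w1 + z2 * w2) * w1 = z1 * (w1\<^sup>2 + w2\<^sup>2)" using crs by algebra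
    have "\<alpha> * w1 = ((z1 * w1 + z2 * w2) * w1) / (w1\<^sup>2 + w2\<^sup>2)" unfolding \<alpha>_def by simp
    also have "\<dots> = z1 * (w1\<^sup>2 + w2\<^sup>2) / (w1\<^sup>2 + w2\<^sup>2)" by (simp only: eq)
    also have "\<dots> = z1" by (rule nonzero_mult_div_cancel_right[OF ww])
    finally show ?thesis .
  qed
  have a2: "\<alpha> * w2 = z2"
  proof -
    have eq: "(z1 * w1 + z2 * w2) * w2 = z2 * (w1\<^sup>2 + w2\<^sup>2)" using crs by algebra
    have "\<alpha> * w2 = ((z1 * w1 + z2 * w2) * w2) / (w1\<^sup>2 + w2\<^sup>2)" unfolding \<alpha>_def by simp
    also have "\<dots> = z2 * (w1\<^sup>2 + w2\<^sup>2) / (w1\<^sup>2 + w2\<^sup>2)" by (simp only: eq)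
    also have "\<dots> = z2" by (rule nonzero_mult_div_cancel_right[OF ww])
    finally show ?thesis .
  qed
  have Yeq: "Y = X + of_real \<alpha> * w"
    using a1 a2 by (simp add: complex_eq_iff z1_def z2_def w1_def w2_def)
  have Zeq: "Z = X + w" by (simp add: w_def)
  have "\<alpha> = 0 \<or> \<alpha> = 1"
    by (rule chord_param[OF ae be X _ _ wnz]) (use Y Z Yeq Zeq in simp_all)
  moreover have "\<alpha> \<noteq> 0" using YX Yeq by auto
  ultimately show ?thesis using Yeq Zeq by simp
qed


lemma cr_self: "cr z z = 0" by (simp add: cr_def)

lemma two_tangents:
  fixes ac bc ae be :: real and X Yp Ym Y :: complex
  assumes ac: "ac > 0" and bc: "bc > 0" and ae: "ae > 0" and be: "be > 0"
    and X: "X \<in> ellipse ae be" and Yp: "Yp \<in> ellipse ae be" and Ym: "Ym \<in> ellipse ae be"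
    and Y: "Y \<in> ellipse ae be" and X0: "X \<noteq> 0"
    and YpX: "Yp \<noteq> X" and YmX: "Ym \<noteq> X" and YX: "Y \<noteq> X"
    and tp: "tangent_to (line_through X Yp) ac bc" and tm: "tangent_to (line_through X Ym) ac bc"
    and t: "tangent_to (line_through X Y) ac bc"
    and crs: "cr (Yp - X) (Ym - X) \<noteq> 0"
  shows "Y = Yp \<or> Y = Ym"
proof -
  define x0 where "x0 = Re X"
  define y0 where "y0 = Im X"
  define ia where "ia = 1 / ac\<^sup>2"
  define ib where "ib = 1 / bc\<^sup>2"
  define C where "C = x0\<^sup>2 * ia + y0\<^sup>2 * ib - 1"
  define p where "p = x0\<^sup>2 * ia\<^sup>2 - C * ia"
  define q where "q = 2 * x0 * y0 * ia * ib"
  define r where "r = y0\<^sup>2 * ib\<^sup>2 - C * ib"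
  have root: "p * (Re Z - Re X)\<^sup>2 + q * (Re Z - Re X) * (Im Z - Im X) + r * (Im Z - Im X)\<^sup>2 = 0"
    if "Z \<noteq> X" "tangent_to (line_through X Z) ac bc" for Z
  proof -
    define v1 where "v1 = Re Z - Re X"
    define v2 where "v2 = Im Z - Im X"
    have d: "(x0 * v1 / ac\<^sup>2 + y0 * v2 / bc\<^sup>2)\<^sup>2 = (v1\<^sup>2 / ac\<^sup>2 + v2\<^sup>2 / bc\<^sup>2) * (x0\<^sup>2 / ac\<^sup>2 + y0\<^sup>2 / bc\<^sup>2 - 1)"
      using tangent_disc[OF ac bc _ that(2)] that(1) unfolding x0_def y0_def v1_def v2_def by auto
    have d2: "(x0 * v1 * ia + y0 * v2 * ib)\<^sup>2 = (v1\<^sup>2 * ia + v2\<^sup>2 * ib) * (x0\<^sup>2 * ia + y0\<^sup>2 * ib - 1)"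
      using d by (simp add: ia_def ib_def)
    have "p * v1\<^sup>2 + q * v1 * v2 + r * v2\<^sup>2 = (x0 * v1 * ia + y0 * v2 * ib)\<^sup>2 - (v1\<^sup>2 * ia + v2\<^sup>2 * ib) * (x0\<^sup>2 * ia + y0\<^sup>2 * ib - 1)"
      unfolding p_def q_def r_def C_def by algebra
    thus ?thesis using d2 unfolding v1_def v2_def by simp
  qed
  have wX: "p * x0\<^sup>2 + q * x0 * y0 + r * y0\<^sup>2 \<noteq> 0"
  proof -
    have "p * x0\<^sup>2 + q * x0 * y0 + r * y0\<^sup>2 = x0\<^sup>2 * ia + y0\<^sup>2 * ib"
      unfolding p_def q_def r_def C_def by algebra
    moreover have "x0\<^sup>2 * ia + y0\<^sup>2 * ib > 0"
    proof -
      have "x0 \<noteq> 0 \<or> y0 \<noteq> 0" using X0 by (auto simp: x0_def y0_def complex_eq_iff)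
      hence "x0\<^sup>2 * ia > 0 \<or> y0\<^sup>2 * ib > 0" using ac bc by (auto simp: ia_def ib_def)
      moreover have "x0\<^sup>2 * ia \<ge> 0" "y0\<^sup>2 * ib \<ge> 0" by (simp_all add: ia_def ib_def)
      ultimately show ?thesis by linarith
    qed
    ultimately show ?thesis by simp
  qed
  have "(Re Y - Re X) * (Im Yp - Im X) - (Im Y - Im X) * (Re Yp - Re X) = 0 \<or>
        (Re Y - Re X) * (Im Ym - Im X) - (Im Y - Im X) * (Re Ym - Re X) = 0"
    by (rule quad_two_roots[OF root[OF YpX tp] root[OF YmX tm] wX _ root[OF YX t]])
       (use crs in \<open>simp add: cr_def\<close>)
  hence "cr (Y - X) (Yp - X) = 0 \<or> cr (Y - X) (Ym - X) = 0" by (simp add: cr_def)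
  thus ?thesis
    using collinear_on_ellipse[OF ae be X Y Yp YX YpX] collinear_on_ellipse[OF ae be X Y Ym YX YmX] by blast
qed

lemma tangent_alg:
  fixes ae be s c dd s' c' d' m Dn :: real
  assumes "c\<^sup>2 = 1 - s\<^sup>2" "d'\<^sup>2 = 1 - m\<^sup>2 * s'\<^sup>2" "Dn = 1 - m\<^sup>2 * s\<^sup>2 * s'\<^sup>2" "Dn \<noteq> 0"
  shows "be * s * d' * (- ae * ((s * c' * d' + s' * c * dd) / Dn)) + (- ae * c) * (be * ((c * c' - s * s' * dd * d') / Dn)) = - ae * be * c'"
proof -
  have "be * s * d' * (- ae * (s * c' * d' + s' * c * dd)) + (- ae * c) * (be * (c * c' - s * s' * dd * d')) = - ae * be * c' * Dn"
    using assms(1-3) by algebra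
  thus ?thesis using assms(4) by (simp add: field_simps)
qed

locale bill =
  fixes ac bc ae be m D :: real
  assumes ac: "ac > 0" and bc: "bc > 0" and ae: "ae > 0" and be: "be > 0"
    and m2: "m\<^sup>2 < 1" and mac: "m\<^sup>2 * ac\<^sup>2 = ac\<^sup>2 - bc\<^sup>2" and conf: "ae\<^sup>2 - be\<^sup>2 = ac\<^sup>2 - bc\<^sup>2"
    and D0: "0 < D" and DK: "D < ellK m" and bcD: "bc = be * jcn m D"
begin

definition bp :: "real \<Rightarrow> complex" where
  "bp \<phi> = Complex (- ae * sin \<phi>) (be * cos \<phi>)"

lemma bparam_bp: "bparam ae be m u = bp (jam m u)"
  by (simp add: bparam_def bp_def jsn_def jcn_def)

lemma jamD: "0 < jam m D" "jam m D < pi / 2"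
  using jam_mono[OF m2 D0] jam_mono[OF m2 DK] by (simp_all add: jam_0[OF m2] jam_K[OF m2])

lemma cD: "jcn m D > 0" using jamD unfolding jcn_def by (intro cos_gt_zero) auto
lemma sD: "jsn m D > 0" using jamD unfolding jsn_def by (intro sin_gt_zero) auto
lemma dD: "jdn m D > 0" by (rule jdn_pos[OF m2])

lemma key: "ac\<^sup>2 * (jdn m D)\<^sup>2 = ae\<^sup>2 * (jcn m D)\<^sup>2"
proof -
  have a: "(jdn m D)\<^sup>2 = 1 - m\<^sup>2 * (jsn m D)\<^sup>2" by (rule jdn_sq[OF m2])
  have b: "(jsn m D)\<^sup>2 + (jcn m D)\<^sup>2 = 1" by (rule jsn_cn_sq)
  have c: "bc\<^sup>2 = be\<^sup>2 * (jcn m D)\<^sup>2" using bcD by (simp add: power_mult_distrib)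
  show ?thesis using a b c mac conf by algebra
qed

lemma cr_bp: "cr (bp a) (bp b) = ae * be * sin (b - a)"
  by (simp add: cr_def bp_def sin_diff algebra_simps)

lemma bp_ell: "bp \<phi> \<in> ellipse ae be"
  using ae be by (simp add: ell_mem bp_def power_mult_distrib)

lemma bp_nz: "bp \<phi> \<noteq> 0"
proof
  assume "bp \<phi> = 0"
  hence "sin \<phi> = 0" "cos \<phi> = 0" using ae be by (auto simp: bp_def complex_eq_iff)
  thus False using sin_cos_squared_add[of \<phi>] by simp
qed

lemma gap: "0 < jam m (u + 2 * D) - jam m u" "jam m (u + 2 * D) - jam m u < pi"
proof -
  show "0 < jam m (u + 2 * D) - jam m u" using jam_mono[OF m2, of u "u + 2 * D"] D0 by simp
  have "jam m (u + 2 * D) < jam m (u + 2 * ellK m)" using jam_mono[OF m2] DK by simp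
  thus "jam m (u + 2 * D) - jam m u < pi" using jam_shift[OF m2, of u] by simp
qed

lemma cr_fwd: "cr (bp (jam m u)) (bp (jam m (u + 2 * D))) > 0"
  unfolding cr_bp using gap[of u] ae be by (intro mult_pos_pos sin_gt_zero) auto

lemma tangent_mid: "tangent_to (line_through (bp (jam m (u - D))) (bp (jam m (u + D)))) ac bc"
proof -
  define s where "s = jsn m u"
  define c where "c = jcn m u"
  define dd where "dd = jdn m u"
  define s' where "s' = jsn m D"
  define c' where "c' = jcn m D"
  define d' where "d' = jdn m D"
  define Dn where "Dn = 1 - m\<^sup>2 * s\<^sup>2 * s'\<^sup>2"
  have Dn: "Dn \<noteq> 0" using den_pos[OF m2 jsn_sq_le jsn_sq_le, of m u m D] by (simp add: Dn_def s_def s'_def)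
  have r1: "c\<^sup>2 = 1 - s\<^sup>2" using jsn_cn_sq[of m u] by (simp add: s_def c_def)
  have r2: "d'\<^sup>2 = 1 - m\<^sup>2 * s'\<^sup>2" using jdn_sq[OF m2, of D] by (simp add: d'_def s'_def)
  have addp: "jsn m (u + D) = (s * c' * d' + s' * c * dd) / Dn" "jcn m (u + D) = (c * c' - s * s' * dd * d') / Dn"
    using add_core[OF m2, of u D] by (simp_all add: s_def c_def dd_def s'_def c'_def d'_def Dn_def)
  have addm: "jsn m (u - D) = (s * c' * d' + (- s') * c * dd) / Dn" "jcn m (u - D) = (c * c' - s * (- s') * dd * d') / Dn"
    using add_core[OF m2, of u "- D"]
    by (simp_all add: s_def c_def dd_def s'_def c'_def d'_def Dn_def jsn_odd[OF m2] jcn_even[OF m2] jdn_even[OF m2])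
  define P where "P = bp (jam m (u - D))"
  define Q where "Q = bp (jam m (u + D))"
  have ReP: "Re P = - ae * jsn m (u - D)" "Im P = be * jcn m (u - D)"
    by (simp_all add: P_def bp_def jsn_def jcn_def)
  have ReQ: "Re Q = - ae * jsn m (u + D)" "Im Q = be * jcn m (u + D)"
    by (simp_all add: Q_def bp_def jsn_def jcn_def)
  have nQ: "(be * s * d') * Re Q + (- ae * c) * Im Q = - ae * be * c'"
    unfolding ReQ addp by (rule tangent_alg[OF r1 r2 Dn_def Dn])
  have nP: "(be * s * d') * Re P + (- ae * c) * Im P = - ae * be * c'"
  proof -
    have r2': "d'\<^sup>2 = 1 - m\<^sup>2 * (- s')\<^sup>2" using r2 by simp
    have Dn': "Dn = 1 - m\<^sup>2 * s\<^sup>2 * (- s')\<^sup>2" by (simp add: Dn_def)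
    show ?thesis unfolding ReP addm by (rule tangent_alg[OF r1 r2' Dn' Dn])
  qed
  have h: "- ae * be * c' \<noteq> 0" using ae be cD by (simp add: c'_def)
  have hh: "(- ae * be * c')\<^sup>2 = ac\<^sup>2 * (be * s * d')\<^sup>2 + bc\<^sup>2 * (- ae * c)\<^sup>2"
  proof -
    have k: "ac\<^sup>2 * d'\<^sup>2 = ae\<^sup>2 * c'\<^sup>2" using key by (simp add: d'_def c'_def)
    have b: "bc = be * c'" using bcD by (simp add: c'_def)
    show ?thesis using k b r1 by algebra
  qed
  have PQ: "P \<noteq> Q"
  proof
    assume "P = Q"
    moreover have "cr P Q > 0" unfolding P_def Q_def using cr_fwd[of "u - D"] by (simp add: algebra_simps)
    ultimately show False by (simp add: cr_self)
  qed
  show ?thesis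
    using tangent_normal[OF ac bc h hh PQ nP nQ] by (simp add: P_def Q_def)
qed

end


lemma cr_sub: "cr (A - X) (B - X) = cr A B + cr X A + cr B X"
  by (simp add: cr_def algebra_simps)

lemma cr_scale: "cr (of_real t * w) w = 0"
  by (simp add: cr_def algebra_simps)

lemma cr_swap: "cr a b = - cr b a" by (simp add: cr_def)

lemma sin_three_pos:
  fixes a b :: real
  assumes "0 < a" "a < pi" "0 < b" "b < pi"
  shows "sin a + sin b - sin (a + b) > 0"
proof -
  have sa: "sin a > 0" using assms by (intro sin_gt_zero) auto
  have sb: "sin b > 0" using assms by (intro sin_gt_zero) auto
  have ca: "cos a < 1"
  proof -
    have "(sin a)\<^sup>2 + (cos a)\<^sup>2 = 1" by simp
    moreover have "(sin a)\<^sup>2 > 0" using sa by simp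
    ultimately have "(cos a)\<^sup>2 < 1" by linarith
    thus ?thesis by (metis abs_square_less_1 abs_less_iff)
  qed
  have cb: "cos b < 1"
  proof -
    have "(sin b)\<^sup>2 + (cos b)\<^sup>2 = 1" by simp
    moreover have "(sin b)\<^sup>2 > 0" using sb by simp
    ultimately have "(cos b)\<^sup>2 < 1" by linarith
    thus ?thesis by (metis abs_square_less_1 abs_less_iff)
  qed
  have "sin a + sin b - sin (a + b) = sin a * (1 - cos b) + sin b * (1 - cos a)"
    by (simp add: sin_add algebra_simps)
  also have "\<dots> > 0" using sa sb ca cb by (intro add_pos_pos mult_pos_pos) auto
  finally show ?thesis .
qed

context bill begin

lemma tangent_fwd: "tangent_to (line_through (bp (jam m u)) (bp (jam m (u + 2 * D)))) ac bc"
  using tangent_mid[of "u + D"] by (simp add: algebra_simps mult_2)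

lemma tangent_bwd: "tangent_to (line_through (bp (jam m u)) (bp (jam m (u - 2 * D)))) ac bc"
  using tangent_mid[of "u - D"] by (simp add: algebra_simps mult_2 line_sym)

lemma cr_bwd: "cr (bp (jam m u)) (bp (jam m (u - 2 * D))) < 0"
proof -
  have g: "0 < jam m u - jam m (u - 2 * D)" "jam m u - jam m (u - 2 * D) < pi"
    using gap[of "u - 2 * D"] by simp_all
  have "sin (jam m u - jam m (u - 2 * D)) > 0" using g by (intro sin_gt_zero) auto
  hence "sin (jam m (u - 2 * D) - jam m u) < 0" by (metis minus_diff_eq neg_less_0_iff_less sin_minus)
  thus ?thesis unfolding cr_bp using ae be by (simp add: mult_pos_neg)
qed

lemma three_cross: "cr (bp (jam m (u + 2 * D)) - bp (jam m u)) (bp (jam m (u - 2 * D)) - bp (jam m u)) > 0"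
proof -
  define a where "a = jam m (u + 2 * D) - jam m u"
  define b where "b = jam m u - jam m (u - 2 * D)"
  have ab: "0 < a" "a < pi" "0 < b" "b < pi" using gap[of u] gap[of "u - 2 * D"] by (simp_all add: a_def b_def)
  have "cr (bp (jam m (u + 2 * D)) - bp (jam m u)) (bp (jam m (u - 2 * D)) - bp (jam m u))
      = ae * be * (sin a + sin b - sin (a + b))"
  proof -
    have e1: "jam m (u - 2 * D) - jam m (u + 2 * D) = - (a + b)" by (simp add: a_def b_def)
    have e2: "jam m (u + 2 * D) - jam m u = a" by (simp add: a_def)
    have e3: "jam m u - jam m (u - 2 * D) = b" by (simp add: b_def)
    have e1': "sin (jam m (u - 2 * D) - jam m (u + 2 * D)) = - sin (a + b)" by (simp only: e1 sin_minus)
    show ?thesis unfolding cr_sub cr_bp e1' e2 e3 by (simp add: algebra_simps)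
  qed
  thus ?thesis using sin_three_pos[OF ab] ae be by simp
qed

lemma step:
  assumes Y: "Y \<in> ellipse ae be" and YX: "Y \<noteq> bp (jam m u)"
    and t: "tangent_to (line_through (bp (jam m u)) Y) ac bc"
  shows "cr (bp (jam m u)) Y > 0 \<Longrightarrow> Y = bp (jam m (u + 2 * D))"
    and "cr (bp (jam m u)) Y < 0 \<Longrightarrow> Y = bp (jam m (u - 2 * D))"
proof -
  have YpX: "bp (jam m (u + 2 * D)) \<noteq> bp (jam m u)"
    using cr_fwd[of u] by (auto simp: cr_self)
  have YmX: "bp (jam m (u - 2 * D)) \<noteq> bp (jam m u)"
    using cr_bwd[of u] by (auto simp: cr_self)
  have crs: "cr (bp (jam m (u + 2 * D)) - bp (jam m u)) (bp (jam m (u - 2 * D)) - bp (jam m u)) \<noteq> 0"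
    using three_cross[of u] by simp
  have or: "Y = bp (jam m (u + 2 * D)) \<or> Y = bp (jam m (u - 2 * D))"
    by (rule two_tangents[OF ac bc ae be bp_ell bp_ell bp_ell Y bp_nz YpX YmX YX tangent_fwd tangent_bwd t crs])
  show "cr (bp (jam m u)) Y > 0 \<Longrightarrow> Y = bp (jam m (u + 2 * D))"
    using or cr_bwd[of u] by auto
  show "cr (bp (jam m u)) Y < 0 \<Longrightarrow> Y = bp (jam m (u - 2 * D))"
    using or cr_fwd[of u] by auto
qed

lemma seq_idx: "u0 + 2 * of_int (i + 1) * D = (u0 + 2 * of_int i * D) + 2 * D"
  "u0 + 2 * of_int (i - 1) * D = (u0 + 2 * of_int i * D) - 2 * D"
  by (simp_all add: algebra_simps)

lemma billiard_seq: "billiard ae be ac bc (\<lambda>k. bparam ae be m (u0 + 2 * of_int k * D))"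
proof -
  define P where "P = (\<lambda>k::int. bparam ae be m (u0 + 2 * of_int k * D))"
  define U where "U = (\<lambda>k::int. u0 + 2 * of_int k * D)"
  have Pk: "P k = bp (jam m (U k))" for k by (simp add: P_def U_def bparam_bp)
  have Un: "U (i + 1) = U i + 2 * D" "U (i - 1) = U i - 2 * D" for i
    unfolding U_def seq_idx by simp_all
  have c1: "\<forall>i. P i \<in> ellipse ae be" by (simp add: Pk bp_ell)
  have c5: "\<forall>i. Re (P i) * Im (P (i + 1)) - Im (P i) * Re (P (i + 1)) > 0"
    using cr_fwd unfolding cr_def Pk Un by blast
  have c2: "\<forall>i. P i \<noteq> P (i + 1)"
    using cr_fwd unfolding Pk Un by (metis cr_self less_irrefl)
  have c3: "\<forall>i. tangent_to (line_through (P i) (P (i + 1))) ac bc"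
    unfolding Pk Un using tangent_fwd by blast
  have c4: "\<forall>i. line_through (P (i - 1)) (P i) \<noteq> line_through (P i) (P (i + 1))"
  proof
    fix i
    show "line_through (P (i - 1)) (P i) \<noteq> line_through (P i) (P (i + 1))"
    proof
      assume eq: "line_through (P (i - 1)) (P i) = line_through (P i) (P (i + 1))"
      have "P (i + 1) \<in> line_through (P i) (P (i + 1))"
        unfolding line_mem by (rule exI[of _ 1]) simp
      hence "P (i + 1) \<in> line_through (P i) (P (i - 1))" using eq line_sym by metis
      then obtain t where t: "P (i + 1) = P i + of_real t * (P (i - 1) - P i)" unfolding line_mem by blast
      have "cr (P (i + 1) - P i) (P (i - 1) - P i) = 0" unfolding t by (simp add: cr_scale)
      moreover have "cr (P (i + 1) - P i) (P (i - 1) - P i) > 0"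
        unfolding Pk Un using three_cross by blast
      ultimately show False by simp
    qed
  qed
  show ?thesis unfolding billiard_def P_def[symmetric] using c1 c2 c3 c4 c5 by blast
qed

lemma billiard_unique:
  assumes B: "billiard ae be ac bc P" and P0: "P 0 = bparam ae be m u0"
  shows "P k = bparam ae be m (u0 + 2 * of_int k * D)"
proof -
  define U where "U = (\<lambda>k::int. u0 + 2 * of_int k * D)"
  have Bs: "\<And>i. P i \<in> ellipse ae be" "\<And>i. P i \<noteq> P (i + 1)"
    "\<And>i. tangent_to (line_through (P i) (P (i + 1))) ac bc"
    "\<And>i. cr (P i) (P (i + 1)) > 0"
    using B unfolding billiard_def cr_def by blast+
  have fwd: "P (int n) = bp (jam m (U (int n)))" for n
  proof (induction n)
    case 0 then show ?case using P0 by (simp add: U_def bparam_bp)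
  next
    case (Suc n)
    have Ueq: "U (int n + 1) = U (int n) + 2 * D" by (simp add: U_def algebra_simps)
    have "P (int n + 1) = bp (jam m (U (int n) + 2 * D))"
      by (rule step(1)[OF Bs(1) _ _ ]) (use Bs(2)[of "int n"] Bs(3)[of "int n"] Bs(4)[of "int n"] Suc in \<open>simp_all\<close>)
    moreover have "int (Suc n) = int n + 1" by simp
    ultimately show ?case by (simp only: Ueq)
  qed
  have bwd: "P (- int n) = bp (jam m (U (- int n)))" for n
  proof (induction n)
    case 0 then show ?case using P0 by (simp add: U_def bparam_bp)
  next
    case (Suc n)
    define i where "i = - int n"
    have Ueq: "U (i - 1) = U i - 2 * D" by (simp add: U_def algebra_simps)
    have ii: "i - 1 + 1 = i" by simp
    have ne: "P (i - 1) \<noteq> P i" using Bs(2)[of "i - 1"] by simp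
    have tg: "tangent_to (line_through (P i) (P (i - 1))) ac bc"
      using Bs(3)[of "i - 1"] by (simp add: line_sym)
    have cneg: "cr (P i) (P (i - 1)) < 0"
      using Bs(4)[of "i - 1"] cr_swap[of "P i" "P (i - 1)"] by simp
    have IH: "P i = bp (jam m (U i))" using Suc by (simp add: i_def)
    have "P (i - 1) = bp (jam m (U i - 2 * D))"
      by (rule step(2)[OF Bs(1)]) (use ne tg cneg IH in \<open>simp_all\<close>)
    moreover have "- int (Suc n) = i - 1" by (simp add: i_def)
    ultimately show ?case by (simp only: Ueq)
  qed
  show ?thesis
  proof (cases "k \<ge> 0")
    case True
    then obtain n where "k = int n" by (metis nonneg_eq_int)
    thus ?thesis using fwd[of n] by (simp add: U_def bparam_bp)
  next
    case False
    then obtain n where "k = - int n" by (metis linorder_linear neg_0_le_iff_le nonneg_eq_int minus_minus)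
    thus ?thesis using bwd[of n] by (simp add: U_def bparam_bp)
  qed
qed

end


lemma cis_eq_imp:
  fixes A th :: real
  assumes "cis A = cis th" "-2 * pi < A - th" "A - th < 2 * pi"
  shows "A = th"
proof -
  have "cis (A - th) = 1" using assms(1) by (simp add: cis_divide[symmetric])
  hence "cos (A - th) = 1" by (metis cis.sel(1) one_complex.sel(1))
  then obtain n :: int where n: "A - th = of_int n * 2 * pi" by (auto simp: cos_one_2pi_int)
  have u: "of_int n < (1::real)"
  proof (rule ccontr)
    assume "\<not> of_int n < (1::real)"
    hence "1 \<le> (of_int n :: real)" by simp
    hence "1 * (2 * pi) \<le> of_int n * (2 * pi)" by (rule mult_right_mono) simp
    thus False using assms(3) n by (simp add: mult_ac)
  qed
  have l: "-1 < (of_int n :: real)"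
  proof (rule ccontr)
    assume "\<not> -1 < (of_int n :: real)"
    hence "of_int n \<le> (-1 :: real)" by simp
    hence "of_int n * (2 * pi) \<le> (-1) * (2 * pi)" by (rule mult_right_mono) simp
    thus False using assms(2) n by (simp add: mult_ac)
  qed
  have "n = 0" using u l by linarith
  thus ?thesis using n by simp
qed

lemma Arg_small:
  assumes "Re w > 0" shows "\<bar>Arg w\<bar> < pi / 2"
proof -
  have "w \<noteq> 0" using assms by auto
  thus ?thesis using Re_Ln_pos_lt_imp[OF assms] by (simp add: Arg_eq_Im_Ln)
qed

lemma sin_cos_shift_int: "sin (x + pi * real (2 * n)) = sin x" "cos (x + pi * real (2 * n)) = cos x"
proof -
  have e: "pi * real (2 * n) = (2 * pi) * of_int (int n)" by simp
  show "sin (x + pi * real (2 * n)) = sin x" unfolding e sin_add by (simp only: sin_int_2pin cos_int_2pin mult_1_right mult_zero_right add_0_right)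
  show "cos (x + pi * real (2 * n)) = cos x" unfolding e cos_add by (simp only: sin_int_2pin cos_int_2pin mult_1_right mult_zero_right diff_0_right)
qed

context bill begin

definition ww :: "real \<Rightarrow> complex" where
  "ww \<phi> = Complex (be * (cos \<phi>)\<^sup>2 + ae * (sin \<phi>)\<^sup>2) ((ae - be) * sin \<phi> * cos \<phi>)"

lemma bp_ww: "bp \<phi> = \<i> * cis \<phi> * ww \<phi>"
proof -
  have s: "(sin \<phi>)\<^sup>2 + (cos \<phi>)\<^sup>2 = 1" by simp
  have c1: "ae * (cos \<phi> * (cos \<phi> * sin \<phi>)) + ae * (sin \<phi> * (sin \<phi> * sin \<phi>)) = ae * sin \<phi>" using s by algebra
  have c2: "be * cos \<phi> = be * (cos \<phi> * (cos \<phi> * cos \<phi>)) + be * (cos \<phi> * (sin \<phi> * sin \<phi>))" using s by algebra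
  show ?thesis unfolding complex_eq_iff
    by (simp add: bp_def ww_def cis.ctr algebra_simps power2_eq_square c1 c2[symmetric])
qed

lemma ww_re: "Re (ww \<phi>) > 0"
proof -
  have s: "(sin \<phi>)\<^sup>2 + (cos \<phi>)\<^sup>2 = 1" by simp
  have "be * (cos \<phi>)\<^sup>2 > 0 \<or> ae * (sin \<phi>)\<^sup>2 > 0"
  proof (cases "cos \<phi> = 0")
    case True
    hence "(sin \<phi>)\<^sup>2 = 1" using s by simp
    thus ?thesis using ae by simp
  next
    case False thus ?thesis using be by simp
  qed
  moreover have "be * (cos \<phi>)\<^sup>2 \<ge> 0" "ae * (sin \<phi>)\<^sup>2 \<ge> 0" using ae be by simp_all
  ultimately have "be * (cos \<phi>)\<^sup>2 + ae * (sin \<phi>)\<^sup>2 > 0" by linarith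
  thus ?thesis by (simp add: ww_def)
qed

lemma ww_nz: "ww \<phi> \<noteq> 0" using ww_re[of \<phi>] by auto

lemma Arg_step:
  "Arg (bp (jam m (u + 2 * D)) / bp (jam m u))
     = (jam m (u + 2 * D) - jam m u) + Arg (ww (jam m (u + 2 * D))) - Arg (ww (jam m u))"
proof -
  define p0 where "p0 = jam m u"
  define p1 where "p1 = jam m (u + 2 * D)"
  define z where "z = bp p1 / bp p0"
  have z0: "z \<noteq> 0" using bp_nz by (simp add: z_def)
  have imz: "Im z > 0"
  proof -
    have "Im z = cr (bp p0) (bp p1) / ((Re (bp p0))\<^sup>2 + (Im (bp p0))\<^sup>2)"
      by (simp add: z_def Im_divide cr_def algebra_simps)
    moreover have "cr (bp p0) (bp p1) > 0" using cr_fwd[of u] by (simp add: p0_def p1_def)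
    moreover have "(Re (bp p0))\<^sup>2 + (Im (bp p0))\<^sup>2 > 0"
      using bp_nz[of p0] by (simp add: sum_power2_gt_zero_iff complex_eq_iff)
    ultimately show ?thesis by simp
  qed
  have A: "0 < Arg z" "Arg z < pi" using imz Arg_lt_pi by blast+
  have zeq: "z = cis (p1 - p0) * (ww p1 / ww p0)"
    unfolding z_def bp_ww using ww_nz by (simp add: cis_divide[symmetric] field_simps)
  have "cis (Arg z) = sgn z" by (rule cis_Arg[OF z0])
  also have "\<dots> = cis (p1 - p0) * (sgn (ww p1) / sgn (ww p0))"
    unfolding zeq by (simp add: sgn_mult sgn_divide)
  also have "\<dots> = cis (p1 - p0) * (cis (Arg (ww p1)) / cis (Arg (ww p0)))"
    using cis_Arg[OF ww_nz] by simp
  also have "\<dots> = cis ((p1 - p0) + Arg (ww p1) - Arg (ww p0))"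
    by (simp add: cis_divide cis_mult algebra_simps)
  finally have ceq: "cis (Arg z) = cis ((p1 - p0) + Arg (ww p1) - Arg (ww p0))" .
  have g: "0 < p1 - p0" "p1 - p0 < pi" using gap[of u] by (simp_all add: p0_def p1_def)
  have a1: "\<bar>Arg (ww p1)\<bar> < pi / 2" "\<bar>Arg (ww p0)\<bar> < pi / 2" using Arg_small ww_re by blast+
  have "Arg z = (p1 - p0) + Arg (ww p1) - Arg (ww p0)"
    by (rule cis_eq_imp[OF ceq]) (use A g a1 in \<open>auto simp: abs_less_iff\<close>)
  thus ?thesis by (simp add: z_def p0_def p1_def)
qed

lemma turning_sum:
  fixes N \<tau> :: nat
  assumes ND: "real N * D = 2 * real \<tau> * ellK m"
  shows "(\<Sum>i\<in>{0..<int N}. Arg (bparam ae be m (u0 + 2 * of_int (i + 1) * D) / bparam ae be m (u0 + 2 * of_int i * D)))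
     = 2 * pi * real \<tau>"
proof -
  define U where "U = (\<lambda>k::int. u0 + 2 * of_int k * D)"
  define g where "g = (\<lambda>j::nat. jam m (U (int j)) + Arg (ww (jam m (U (int j)))))"
  have tmq: "Arg (bparam ae be m (U (int j + 1)) / bparam ae be m (U (int j))) = g (Suc j) - g j" for j
  proof -
    have "U (int j + 1) = U (int j) + 2 * D" by (simp add: U_def algebra_simps)
    moreover have "U (int (Suc j)) = U (int j) + 2 * D" by (simp add: U_def algebra_simps)
    ultimately show ?thesis unfolding bparam_bp g_def using Arg_step[of "U (int j)"] by simp
  qed
  have "(\<Sum>i\<in>{0..<int N}. Arg (bparam ae be m (U (i + 1)) / bparam ae be m (U i)))
      = (\<Sum>j\<in>{0..<N}. Arg (bparam ae be m (U (int j + 1)) / bparam ae be m (U (int j))))"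
  proof -
    have "{0..<int N} = int ` {0..<N}" by (simp add: image_int_atLeastLessThan)
    thus ?thesis by (simp add: sum.reindex)
  qed
  also have "\<dots> = (\<Sum>j<N. g (Suc j) - g j)" by (simp add: tmq atLeast0LessThan)
  also have "\<dots> = g N - g 0" by (rule sum_lessThan_telescope)
  also have "\<dots> = 2 * pi * real \<tau>"
  proof -
    have UN: "U (int N) = U 0 + 2 * ellK m * real (2 * \<tau>)" using ND by (simp add: U_def algebra_simps)
    have jN: "jam m (U (int N)) = jam m (U 0) + pi * real (2 * \<tau>)"
      unfolding UN by (rule jam_shift_nat[OF m2])
    have wN: "ww (jam m (U (int N))) = ww (jam m (U 0))"
      unfolding jN ww_def sin_cos_shift_int ..
    show ?thesis unfolding g_def using jN wN by simp
  qed
  finally show ?thesis by (simp add: U_def)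
qed

end


lemma bparam_surj:
  assumes ae: "ae > 0" and be: "be > 0" and m2: "m\<^sup>2 < 1" and z: "z \<in> ellipse ae be"
  shows "\<exists>u. z = bparam ae be m u"
proof -
  have "(Im z / be)\<^sup>2 + (- Re z / ae)\<^sup>2 = 1" using z by (simp add: ell_mem add.commute)
  then obtain t where t: "Im z / be = cos t" "- Re z / ae = sin t" by (rule sincos_total_2pi)
  have "jam m (ellF m t) = t" by (rule jam_ellF[OF m2])
  hence "bparam ae be m (ellF m t) = Complex (- ae * sin t) (be * cos t)"
    by (simp add: bparam_def jsn_def jcn_def)
  also have "\<dots> = z" using t ae be by (simp add: complex_eq_iff field_simps)
  finally show ?thesis by metis
qed

theorem theorem2:
  fixes ac bc :: real
  assumes "ac > bc" and "bc > 0"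
  defines "d \<equiv> sqrt (ac\<^sup>2 - bc\<^sup>2)"
  defines "m \<equiv> d / ac"
  shows
    "(\<forall>ae be. confocal_exterior ae be ac bc \<longrightarrow>
        (\<forall>\<Delta>. 0 < \<Delta> \<and> \<Delta> < ellK m \<and> bc = be * jcn m \<Delta> \<longrightarrow>
          (\<forall>u0. billiard ae be ac bc (\<lambda>k. bparam ae be m (u0 + 2 * of_int k * \<Delta>)) \<and>
                (\<forall>P. billiard ae be ac bc P \<and> P 0 = bparam ae be m u0 \<longrightarrow>
                      (\<forall>k. P k = bparam ae be m (u0 + 2 * of_int k * \<Delta>))))))
     \<and>
     (\<forall>N \<tau> :: nat. 3 \<le> N \<and> 1 \<le> \<tau> \<and> coprime N \<tau> \<and> 2 * \<tau> < N \<longrightarrow>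
        (let \<Delta> = 2 * real \<tau> * ellK m / real N;
             ae = ac * jdn m \<Delta> / jcn m \<Delta>;
             be = bc / jcn m \<Delta>
         in confocal_exterior ae be ac bc \<and>
            (\<forall>P. billiard ae be ac bc P \<longrightarrow>
                 periodic_billiard P N \<and> turning_number P N = real \<tau>)))"
proof -
  have ac: "ac > 0" using assms(1,2) by linarith
  have bc: "bc > 0" by (rule assms(2))
  have sq: "ac\<^sup>2 - bc\<^sup>2 > 0" using assms(1,2) by (simp add: power_strict_mono)
  have d2: "d\<^sup>2 = ac\<^sup>2 - bc\<^sup>2" unfolding d_def using sq by simp
  have mac: "m\<^sup>2 * ac\<^sup>2 = ac\<^sup>2 - bc\<^sup>2" unfolding m_def using ac d2 by (simp add: power_divide)
  have m2: "m\<^sup>2 < 1"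
  proof -
    have "m\<^sup>2 * ac\<^sup>2 < 1 * ac\<^sup>2" using mac bc by simp
    thus ?thesis using ac by (simp add: mult_less_cancel_right)
  qed
  have part1: "\<forall>ae be. confocal_exterior ae be ac bc \<longrightarrow>
        (\<forall>\<Delta>. 0 < \<Delta> \<and> \<Delta> < ellK m \<and> bc = be * jcn m \<Delta> \<longrightarrow>
          (\<forall>u0. billiard ae be ac bc (\<lambda>k. bparam ae be m (u0 + 2 * of_int k * \<Delta>)) \<and>
                (\<forall>P. billiard ae be ac bc P \<and> P 0 = bparam ae be m u0 \<longrightarrow>
                      (\<forall>k. P k = bparam ae be m (u0 + 2 * of_int k * \<Delta>)))))"
  proof (intro allI impI)
    fix ae be \<Delta> u0
    assume ce: "confocal_exterior ae be ac bc"
      and Dc: "0 < \<Delta> \<and> \<Delta> < ellK m \<and> bc = be * jcn m \<Delta>"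
    from ce obtain k where ae: "ae > 0" and be: "be > 0" and k: "ae\<^sup>2 = ac\<^sup>2 + k" "be\<^sup>2 = bc\<^sup>2 + k"
      unfolding confocal_exterior_def by blast
    interpret bill ac bc ae be m \<Delta>
      by unfold_locales (use ac bc ae be m2 mac k Dc in auto)
    show "billiard ae be ac bc (\<lambda>k. bparam ae be m (u0 + 2 * of_int k * \<Delta>)) \<and>
          (\<forall>P. billiard ae be ac bc P \<and> P 0 = bparam ae be m u0 \<longrightarrow>
               (\<forall>k. P k = bparam ae be m (u0 + 2 * of_int k * \<Delta>)))"
      using billiard_seq billiard_unique by blast
  qed
  have part2: "\<forall>N \<tau> :: nat. 3 \<le> N \<and> 1 \<le> \<tau> \<and> coprime N \<tau> \<and> 2 * \<tau> < N \<longrightarrow>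
        (let \<Delta> = 2 * real \<tau> * ellK m / real N;
             ae = ac * jdn m \<Delta> / jcn m \<Delta>;
             be = bc / jcn m \<Delta>
         in confocal_exterior ae be ac bc \<and>
            (\<forall>P. billiard ae be ac bc P \<longrightarrow>
                 periodic_billiard P N \<and> turning_number P N = real \<tau>))"
  proof (intro allI impI)
    fix N \<tau> :: nat
    assume NT: "3 \<le> N \<and> 1 \<le> \<tau> \<and> coprime N \<tau> \<and> 2 * \<tau> < N"
    define \<Delta> where "\<Delta> = 2 * real \<tau> * ellK m / real N"
    define ae where "ae = ac * jdn m \<Delta> / jcn m \<Delta>"
    define be where "be = bc / jcn m \<Delta>"
    have K: "ellK m > 0" by (rule ellK_pos[OF m2])
    have Npos: "real N > 0" using NT by simp
    have ND: "real N * \<Delta> = 2 * real \<tau> * ellK m" unfolding \<Delta>_def using Npos by simp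
    have D0: "0 < \<Delta>" unfolding \<Delta>_def using NT K Npos by simp
    have DK: "\<Delta> < ellK m"
    proof -
      have "2 * real \<tau> < real N" using NT by linarith
      hence "2 * real \<tau> * ellK m < real N * ellK m" using K by simp
      thus ?thesis unfolding \<Delta>_def using Npos by (simp add: divide_less_eq mult.commute)
    qed
    have jD: "0 < jam m \<Delta>" "jam m \<Delta> < pi / 2"
      using jam_mono[OF m2 D0] jam_mono[OF m2 DK] by (simp_all add: jam_0[OF m2] jam_K[OF m2])
    have cpos: "jcn m \<Delta> > 0" using jD unfolding jcn_def by (intro cos_gt_zero) auto
    have clt: "jcn m \<Delta> < 1"
    proof -
      have "cos (jam m \<Delta>) < cos 0" using jD by (intro cos_monotone_0_pi) auto
      thus ?thesis by (simp add: jcn_def)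
    qed
    have dpos: "jdn m \<Delta> > 0" by (rule jdn_pos[OF m2])
    have ae: "ae > 0" unfolding ae_def using ac cpos dpos by simp
    have be: "be > 0" unfolding be_def using bc cpos by simp
    have bcD: "bc = be * jcn m \<Delta>" unfolding be_def using cpos by simp
    have bebc: "be\<^sup>2 - bc\<^sup>2 > 0"
    proof -
      have "bc * jcn m \<Delta> < bc" using bc clt by simp
      hence "bc < be" unfolding be_def using cpos by (simp add: less_divide_eq)
      hence "bc\<^sup>2 < be\<^sup>2" using bc by (intro power_strict_mono) auto
      thus ?thesis by simp
    qed
    have aeq: "ae\<^sup>2 = ac\<^sup>2 + (be\<^sup>2 - bc\<^sup>2)"
    proof -
      define c where "c = jcn m \<Delta>"
      define s where "s = jsn m \<Delta>"
      define dd where "dd = jdn m \<Delta>"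
      have r1: "dd\<^sup>2 = 1 - m\<^sup>2 * s\<^sup>2" unfolding dd_def s_def by (rule jdn_sq[OF m2])
      have r2: "s\<^sup>2 + c\<^sup>2 = 1" unfolding s_def c_def by (rule jsn_cn_sq)
      have e: "ac\<^sup>2 * dd\<^sup>2 = ac\<^sup>2 * c\<^sup>2 + bc\<^sup>2 - bc\<^sup>2 * c\<^sup>2" using r1 r2 mac by algebra
      have c0: "c \<noteq> 0" using cpos by (simp add: c_def)
      have "ae\<^sup>2 = ac\<^sup>2 * dd\<^sup>2 / c\<^sup>2" by (simp add: ae_def c_def dd_def power_divide power_mult_distrib)
      also have "\<dots> = (ac\<^sup>2 * c\<^sup>2 + bc\<^sup>2 - bc\<^sup>2 * c\<^sup>2) / c\<^sup>2" by (simp only: e)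
      also have "\<dots> = ac\<^sup>2 + (bc\<^sup>2 / c\<^sup>2 - bc\<^sup>2)" using c0 by (simp add: field_simps)
      also have "bc\<^sup>2 / c\<^sup>2 = be\<^sup>2" by (simp add: be_def c_def power_divide)
      finally show ?thesis .
    qed
    have ce: "confocal_exterior ae be ac bc"
      unfolding confocal_exterior_def using ae be bebc aeq by auto
    interpret bill ac bc ae be m \<Delta>
      by unfold_locales (use ac bc ae be m2 mac aeq D0 DK bcD in auto)
    have per: "\<forall>P. billiard ae be ac bc P \<longrightarrow> periodic_billiard P N \<and> turning_number P N = real \<tau>"
    proof (intro allI impI)
      fix P assume B: "billiard ae be ac bc P"
      have "P 0 \<in> ellipse ae be" using B unfolding billiard_def by blast
      then obtain u0 where u0: "P 0 = bparam ae be m u0" using bparam_surj[OF ae be m2] by blast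
      have Pk: "P k = bparam ae be m (u0 + 2 * of_int k * \<Delta>)" for k by (rule billiard_unique[OF B u0])
      have "periodic_billiard P N"
        unfolding periodic_billiard_def
      proof
        fix i
        have e: "u0 + 2 * of_int (i + int N) * \<Delta> = (u0 + 2 * of_int i * \<Delta>) + 2 * ellK m * real (2 * \<tau>)"
          using ND by (simp add: algebra_simps)
        show "P (i + int N) = P i"
          unfolding Pk e bparam_bp jam_shift_nat[OF m2] bp_def sin_cos_shift_int ..
      qed
      moreover have "turning_number P N = real \<tau>"
        unfolding turning_number_def Pk turning_sum[OF ND] by simp
      ultimately show "periodic_billiard P N \<and> turning_number P N = real \<tau>" ..
    qed
    show "let \<Delta> = 2 * real \<tau> * ellK m / real N;
             ae = ac * jdn m \<Delta> / jcn m \<Delta>;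
             be = bc / jcn m \<Delta>
         in confocal_exterior ae be ac bc \<and>
            (\<forall>P. billiard ae be ac bc P \<longrightarrow>
                 periodic_billiard P N \<and> turning_number P N = real \<tau>)"
      unfolding Let_def \<Delta>_def[symmetric] ae_def[symmetric] be_def[symmetric] using ce per by blast
  qed
  show ?thesis using part1 part2 by blast
qed


end
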